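(* Let $X$ be a real Hilbert space, let $f:X\to\mathbb{R}\cup\{+\infty\}$ be a proper $\Phi_{lsc}$-convex function and $\bar x\in\mathrm{dom}(f)$. If there exist $\rho\ge 0$ and $\delta>0$ such that $f(x)\ge f(\bar x)-\rho\|x-\bar x\|^2$ for all $x$ with $\|x-\bar x\|<\delta$, then there exists $\bar\rho\ge 0$ such that $f(x)\ge f(\bar x)-\bar\rho\|x-\bar x\|^2$ for all $x\in X$.
   Context: $\Phi_{lsc}$ is the class of functions $\varphi:X\to\mathbb{R}$, $\varphi(x)=-a\|x\|^2+\langle v,x\rangle+c$ with $a\ge0$, $v\in X^*$, $c\in\mathbb{R}$. $\mathrm{supp}(f):=\{\varphi\in\Phi_{lsc}:\varphi\le f \text{ on } X\}$. $f$ is $\Phi_{lsc}$-convex if $f=\sup\{\varphi:\varphi\in\mathrm{supp}(f)\}$ pointwise. $f$ is proper if $\mathrm{supp}(f)\ne\emptyset$ and $\mathrm{dom}(f):=\{x:f(x)<+\infty\}\neq\emptyset$. *)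

theory Defs
  imports "HOL-Analysis.Analysis"
begin

definition Phi_lsc :: "('a::real_normed_vector \<Rightarrow> real) set" where
  "Phi_lsc = {\<phi>. \<exists>a l c. a \<ge> 0 \<and> bounded_linear l \<and>
                      (\<forall>x. \<phi> x = - a * (norm x)\<^sup>2 + l x + c)}"

definition supp :: "('a::real_normed_vector \<Rightarrow> ereal) \<Rightarrow> ('a \<Rightarrow> real) set" where
  "supp f = {\<phi> \<in> Phi_lsc. \<forall>x. ereal (\<phi> x) \<le> f x}"

definition Phi_lsc_convex :: "('a::real_normed_vector \<Rightarrow> ereal) \<Rightarrow> bool" where
  "Phi_lsc_convex f \<longleftrightarrow> (\<forall>x. f x = (SUP \<phi>\<in>supp f. ereal (\<phi> x)))"

definition edom :: "('a \<Rightarrow> ereal) \<Rightarrow> 'a set" where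
  "edom f = {x. f x < \<infinity>}"

definition proper_fun :: "('a::real_normed_vector \<Rightarrow> ereal) \<Rightarrow> bool" where
  "proper_fun f \<longleftrightarrow> supp f \<noteq> {} \<and> edom f \<noteq> {}"

end

theory Submission
  imports Defs
begin

theorem mainTheorem2:
  fixes f :: "'a::{real_inner, complete_space} \<Rightarrow> ereal" and xbar :: 'a
  assumes noninf: "\<forall>x. f x \<noteq> -\<infinity>"
    and proper: "proper_fun f"
    and conv: "Phi_lsc_convex f"
    and dom: "xbar \<in> edom f"
    and localbd: "\<exists>\<rho> \<delta>. \<rho> \<ge> 0 \<and> \<delta> > 0 \<and>
       (\<forall>x. norm (x - xbar) < \<delta> \<longrightarrow> f x \<ge> f xbar - ereal (\<rho> * (norm (x - xbar))\<^sup>2))"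
  shows "\<exists>\<rho>'. \<rho>' \<ge> 0 \<and> (\<forall>x. f x \<ge> f xbar - ereal (\<rho>' * (norm (x - xbar))\<^sup>2))"
proof -
  obtain \<rho> \<delta> where r0: "\<rho> \<ge> 0" and d0: "\<delta> > 0" and loc:
    "\<And>x. norm (x - xbar) < \<delta> \<Longrightarrow> f x \<ge> f xbar - ereal (\<rho> * (norm (x - xbar))\<^sup>2)"
    using localbd by blast
  from proper obtain \<phi> where "\<phi> \<in> supp f" unfolding proper_fun_def by blast
  then obtain a l c where a0: "a \<ge> 0" and bl: "bounded_linear l"
    and phi: "\<And>x. \<phi> x = - a * (norm x)\<^sup>2 + l x + c" and phile: "\<And>x. ereal (\<phi> x) \<le> f x"
    unfolding supp_def Phi_lsc_def by blast
  obtain K where K0: "K > 0" and Kb: "\<And>x. norm (l x) \<le> norm x * K"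
    using bounded_linear.pos_bounded[OF bl] by blast
  obtain r where fr: "f xbar = ereal r"
    using dom noninf unfolding edom_def by (cases "f xbar") auto
  define n where "n = norm xbar"
  define D where "D = \<bar>r - c + 2*a*n^2 + K*n\<bar>"
  define \<rho>' where "\<rho>' = max \<rho> (2*a + K/\<delta> + D/\<delta>^2)"
  have D0: "D \<ge> 0" unfolding D_def by simp
  have rp0: "\<rho>' \<ge> 0" using r0 unfolding \<rho>'_def by simp
  show ?thesis
  proof (intro exI conjI allI)
    show "\<rho>' \<ge> 0" by (fact rp0)
    fix x
    define t where "t = norm (x - xbar)"
    have t0: "t \<ge> 0" unfolding t_def by simp
    show "f x \<ge> f xbar - ereal (\<rho>' * (norm (x - xbar))\<^sup>2)"
    proof (cases "t < \<delta>")
      case True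
      have "\<rho> * t^2 \<le> \<rho>' * t^2" unfolding \<rho>'_def by (intro mult_right_mono) auto
      hence "ereal r - ereal (\<rho>' * t^2) \<le> ereal r - ereal (\<rho> * t^2)" by simp
      also have "\<dots> \<le> f x" using loc[of x] True fr unfolding t_def by simp
      finally show ?thesis using fr unfolding t_def by simp
    next
      case False
      hence td: "t \<ge> \<delta>" by simp
      have nx: "norm x \<le> t + n" unfolding t_def n_def
        by (metis diff_add_cancel norm_triangle_ineq)
      have nx0: "norm x \<ge> 0" by simp
      have sq: "(norm x)^2 \<le> 2*t^2 + 2*n^2"
      proof -
        have "(norm x)^2 \<le> (t+n)^2" using nx nx0 by (intro power_mono) auto
        also have "\<dots> \<le> 2*t^2 + 2*n^2"
        proof -
          have "0 \<le> (t-n)^2" by simp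
          thus ?thesis by (simp add: power2_eq_square algebra_simps)
        qed
        finally show ?thesis .
      qed
      have lx: "l x \<ge> - K * t - K * n"
      proof -
        have "\<bar>l x\<bar> \<le> norm x * K" using Kb[of x] by simp
        also have "\<dots> \<le> (t+n)*K" using nx K0 by (intro mult_right_mono) auto
        finally show ?thesis by (simp add: algebra_simps)
      qed
      have ph: "\<phi> x \<ge> -2*a*t^2 - 2*a*n^2 - K*t - K*n + c"
      proof -
        have "a * (norm x)^2 \<le> a*(2*t^2 + 2*n^2)" using sq a0 by (intro mult_left_mono) auto
        thus ?thesis using phi[of x] lx by (simp add: algebra_simps)
      qed
      have tt: "t^2 > 0" using td d0 by simp
      have k1: "K * t \<le> K/\<delta> * t^2"
      proof -
        have "K*t*\<delta> \<le> K*t*t" using td K0 t0 by (intro mult_left_mono) auto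
        thus ?thesis using d0 by (simp add: field_simps power2_eq_square)
      qed
      have k2: "D \<le> D/\<delta>^2 * t^2"
      proof -
        have "\<delta>^2 \<le> t^2" using td d0 by (intro power_mono) auto
        hence "D*\<delta>^2 \<le> D*t^2" using D0 by (intro mult_left_mono) auto
        thus ?thesis using d0 by (simp add: field_simps)
      qed
      have k3: "(2*a + K/\<delta> + D/\<delta>^2) * t^2 \<le> \<rho>' * t^2"
        unfolding \<rho>'_def by (intro mult_right_mono) auto
      have "r - c + 2*a*n^2 + K*n \<le> D" unfolding D_def by simp
      hence key: "r - \<rho>' * t^2 \<le> \<phi> x" using ph k1 k2 k3 by (simp add: algebra_simps)
      have "f xbar - ereal (\<rho>' * (norm (x - xbar))\<^sup>2) = ereal (r - \<rho>' * t^2)"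
        using fr unfolding t_def by simp
      also have "\<dots> \<le> ereal (\<phi> x)" using key by simp
      also have "\<dots> \<le> f x" by (fact phile)
      finally show ?thesis .
    qed
  qed
qed

end
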